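(* Let $\mathbf{G}\subset\mathbb{R}^n$ be a convex bounded open set with real algebraic boundary, with $0\in\mathbf{G}$ and $\mathbf{G}=\mathrm{int}\,\overline{\mathbf{G}}$, and assume some polynomial of degree at most $d$ vanishes on $\partial\mathbf{G}$ and not at $0$. Let $y_\alpha=\int_{\mathbf{G}}\mathbf{x}^\alpha d\mathbf{x}$. Then the system $\mathbf{M}^d_d(\mathbf{y})\begin{bmatrix}-1\\ \mathbf{g}\end{bmatrix}=0$ in $\mathbf{g}\in\mathbb{R}^{s(d)-1}$ has a solution, and for every solution $\mathbf{g}$ the polynomial $1-g$, where $g$ has coefficient vector $(0,\mathbf{g})$, vanishes on $\partial\mathbf{G}$.
   Context: $\mathbb{N}^n_k:=\{\alpha\in\mathbb{N}^n:|\alpha|\le k\}$, $s(d)=\binom{n+d}{n}$. The matrix $\mathbf{M}^d_d(\mathbf{y})$ has rows indexed by $\alpha\in\mathbb{N}^n_d$, columns by $\beta\in\mathbb{N}^n_d$ (first column $\beta=0$), entries $\frac{n+|\alpha|+|\beta|}{n+|\alpha|}y_{\alpha+\beta}$; so the system reads $-y_\alpha+\sum_{0<|\beta|\le d}\frac{n+|\alpha|+|\beta|}{n+|\alpha|}y_{\alpha+\beta}g_\beta=0$ for all $|\alpha|\le d$. *)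

theory Defs
  imports "HOL-Analysis.Analysis"
begin

text \<open>Multi-indices \<alpha> \<in> \<nat>^n are functions from the index type 'n to nat;
  points of \<real>^n are vectors of type real^'n, with n = CARD('n).\<close>

definition mdeg :: "('n::finite \<Rightarrow> nat) \<Rightarrow> nat" where
  "mdeg \<alpha> = (\<Sum>i\<in>UNIV. \<alpha> i)"

definition xmono :: "real^'n::finite \<Rightarrow> ('n \<Rightarrow> nat) \<Rightarrow> real" where
  "xmono x \<alpha> = (\<Prod>i\<in>UNIV. (x $ i) ^ (\<alpha> i))"

text \<open>\<nat>^n_k\<close>
definition midx :: "nat \<Rightarrow> ('n::finite \<Rightarrow> nat) set" where
  "midx k = {\<alpha>. mdeg \<alpha> \<le> k}"

definition zidx :: "'n \<Rightarrow> nat" where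
  "zidx = (\<lambda>_. 0)"

text \<open>Evaluation of a polynomial of degree at most k with coefficient function c
  (coefficients of monomials of degree > k are required to be zero separately).\<close>
definition peval :: "nat \<Rightarrow> (('n::finite \<Rightarrow> nat) \<Rightarrow> real) \<Rightarrow> real^'n \<Rightarrow> real" where
  "peval k c x = (\<Sum>\<alpha>\<in>midx k. c \<alpha> * xmono x \<alpha>)"

definition deg_le :: "nat \<Rightarrow> (('n::finite \<Rightarrow> nat) \<Rightarrow> real) \<Rightarrow> bool" where
  "deg_le k c \<longleftrightarrow> (\<forall>\<alpha>. k < mdeg \<alpha> \<longrightarrow> c \<alpha> = 0)"

text \<open>G has real algebraic boundary: \<partial>G is contained in the zero set of a nonzero polynomial.\<close>
definition algebraic_boundary :: "(real^'n::finite) set \<Rightarrow> bool" where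
  "algebraic_boundary G \<longleftrightarrow>
     (\<exists>D c. deg_le D c \<and> (\<exists>\<alpha>. c \<alpha> \<noteq> 0) \<and> (\<forall>x\<in>frontier G. peval D c x = 0))"

text \<open>Moments y_\<alpha> = \<integral>_G x^\<alpha> dx.\<close>
definition moment :: "(real^'n::finite) set \<Rightarrow> ('n \<Rightarrow> nat) \<Rightarrow> real" where
  "moment G \<alpha> = integral G (\<lambda>x. xmono x \<alpha>)"

text \<open>The linear system M^d_d(y) [-1; g] = 0, with unknowns g_\<beta> for 0 < |\<beta>| \<le> d.\<close>
definition moment_system :: "nat \<Rightarrow> (('n::finite \<Rightarrow> nat) \<Rightarrow> real) \<Rightarrow> (('n \<Rightarrow> nat) \<Rightarrow> real) \<Rightarrow> bool" where
  "moment_system d y g \<longleftrightarrow>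
     (\<forall>\<alpha>\<in>midx d. - y \<alpha> +
        (\<Sum>\<beta>\<in>midx d - {zidx}.
           real (CARD('n) + mdeg \<alpha> + mdeg \<beta>) / real (CARD('n) + mdeg \<alpha>)
             * y (\<lambda>i. \<alpha> i + \<beta> i) * g \<beta>) = 0)"

end

theory Submission
  imports Defs
begin


lemma lborel_integral_scale:
  fixes f :: "'a::euclidean_space \<Rightarrow> real" and c :: real
  assumes c: "c \<noteq> 0" and f[measurable]: "f \<in> borel_measurable borel"
  shows "(\<integral>x. f x \<partial>lborel) = \<bar>c\<bar>^DIM('a) * (\<integral>x. f (c *\<^sub>R x) \<partial>lborel)"
  by (subst lborel_affine[OF c, of 0]) (simp add: integral_density integral_distr)

definition Iset :: "(real^'n::finite) set \<Rightarrow> (real^'n \<Rightarrow> real) \<Rightarrow> real" where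
  "Iset S f = (\<integral>x. indicator S x * f x \<partial>lborel)"

lemma cont_xmono[continuous_intros]: "continuous_on A (\<lambda>x. xmono x \<alpha>)"
  unfolding xmono_def by (intro continuous_intros)

lemma xmono_scale: "xmono (t *\<^sub>R x) \<alpha> = t ^ mdeg \<alpha> * xmono x \<alpha>"
  unfolding xmono_def mdeg_def
  by (simp add: power_mult_distrib prod.distrib power_sum)

lemma xmono_add: "xmono x (\<lambda>i. \<alpha> i + \<beta> i) = xmono x \<alpha> * xmono x \<beta>"
  unfolding xmono_def by (simp add: power_add prod.distrib)

lemma mdeg_add: "mdeg (\<lambda>i. \<alpha> i + \<beta> i) = mdeg \<alpha> + mdeg \<beta>"
  unfolding mdeg_def by (simp add: sum.distrib)

lemma xmono_zidx[simp]: "xmono x zidx = 1"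
  unfolding xmono_def zidx_def by simp

lemma mdeg_zidx[simp]: "mdeg zidx = 0"
  unfolding mdeg_def zidx_def by simp

lemma add_zidx[simp]: "(\<lambda>i. \<alpha> i + zidx i) = \<alpha>"
  unfolding zidx_def by simp

lemma xmono_0: "xmono 0 \<alpha> = (if \<alpha> = zidx then 1 else 0)"
proof (cases "\<alpha> = zidx")
  case False
  then obtain i where "\<alpha> i \<noteq> 0" unfolding zidx_def by auto
  then have "xmono 0 \<alpha> = 0" unfolding xmono_def
    by (auto simp: prod_zero_iff)
  then show ?thesis using False by simp
qed simp

lemma finite_midx[simp]: "finite (midx d :: ('n::finite \<Rightarrow> nat) set)"
proof -
  have "midx d \<subseteq> Pi\<^sub>E (UNIV::'n set) (\<lambda>_. {..d})"
  proof
    fix \<alpha> :: "'n \<Rightarrow> nat" assume "\<alpha> \<in> midx d"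
    then have "mdeg \<alpha> \<le> d" by (simp add: midx_def)
    moreover have "\<alpha> i \<le> mdeg \<alpha>" for i unfolding mdeg_def
      by (rule member_le_sum) auto
    ultimately show "\<alpha> \<in> Pi\<^sub>E UNIV (\<lambda>_. {..d})" by (auto intro: order_trans)
  qed
  then show ?thesis by (rule finite_subset) (simp add: finite_PiE)
qed

lemma zidx_midx[simp]: "zidx \<in> midx d"
  by (simp add: midx_def)

lemma peval_0: "peval d p 0 = p zidx"
  unfolding peval_def xmono_0 by (simp add: if_distrib sum.delta cong: if_cong)

lemma Iset_integrable:
  assumes "bounded S" "S \<in> sets borel" "continuous_on UNIV f"
  shows "integrable lborel (\<lambda>x. indicator S x * f x :: real)"
proof -
  have i1: "integrable lborel (\<lambda>x. indicator (closure S) x *\<^sub>R f x)"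
    using assms by (intro borel_integrable_compact) (auto intro: continuous_on_subset simp: compact_closure)
  have "integrable lborel (\<lambda>x. indicator S x *\<^sub>R (indicator (closure S) x *\<^sub>R f x))"
    using integrable_mult_indicator[OF _ i1, of S] assms by simp
  moreover have "(\<lambda>x. indicator S x *\<^sub>R (indicator (closure S) x *\<^sub>R f x)) = (\<lambda>x. indicator S x * f x)"
    using closure_subset[of S] by (auto simp: fun_eq_iff indicator_def)
  ultimately show ?thesis by metis
qed

lemma moment_Iset:
  assumes "bounded S" "open S"
  shows "moment S \<alpha> = Iset S (\<lambda>x. xmono x \<alpha>)"
proof -
  have int: "integrable lborel (\<lambda>x. indicator S x * xmono x \<alpha>)"
    using assms by (intro Iset_integrable) (auto intro: continuous_intros)
  have "moment S \<alpha> = integral UNIV (\<lambda>x. if x \<in> S then xmono x \<alpha> else 0)"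
    unfolding moment_def by (simp add: integral_restrict_UNIV)
  also have "\<dots> = integral UNIV (\<lambda>x. indicator S x * xmono x \<alpha>)"
    by (rule arg_cong[where f="integral UNIV"]) (auto simp: indicator_def)
  also have "\<dots> = Iset S (\<lambda>x. xmono x \<alpha>)"
    unfolding Iset_def using int by (simp add: integral_lborel)
  finally show ?thesis .
qed

lemma Iset_scale:
  assumes t: "t > 0" and S: "open S" and f: "continuous_on UNIV f"
  shows "Iset ((*\<^sub>R) t ` S) f = t ^ CARD('n) * Iset (S :: (real^'n::finite) set) (\<lambda>x. f (t *\<^sub>R x))"
proof -
  have o: "open ((*\<^sub>R) t ` S)" using S t by (simp add: open_scaling)
  have [measurable]: "f \<in> borel_measurable borel" using f by (rule borel_measurable_continuous_onI)
  have [measurable]: "(*\<^sub>R) t ` S \<in> sets borel" using o by auto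
  have "Iset ((*\<^sub>R) t ` S) f = \<bar>t\<bar>^DIM(real^'n) * (\<integral>x. indicator ((*\<^sub>R) t ` S) (t *\<^sub>R x) * f (t *\<^sub>R x) \<partial>lborel)"
    unfolding Iset_def using t by (intro lborel_integral_scale) auto
  also have "(\<lambda>x. indicator ((*\<^sub>R) t ` S) (t *\<^sub>R x) * f (t *\<^sub>R x)) = (\<lambda>x. indicator S x * f (t *\<^sub>R x))"
    using t by (auto simp: indicator_def fun_eq_iff)
  finally show ?thesis using t unfolding Iset_def by simp
qed



lemma Iset_cmult: "Iset S (\<lambda>x. a * f x) = a * Iset S f"
  unfolding Iset_def by (simp add: mult.left_commute[of "indicator S _"])

lemma Iset_sum:
  assumes "finite I" "bounded S" "S \<in> sets borel" "\<And>i. i \<in> I \<Longrightarrow> continuous_on UNIV (f i)"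
  shows "Iset S (\<lambda>x. \<Sum>i\<in>I. f i x) = (\<Sum>i\<in>I. Iset S (f i))"
  unfolding Iset_def sum_distrib_left
  by (rule Bochner_Integration.integral_sum) (use assms Iset_integrable in auto)

lemma Iset_poly_scale:
  assumes t: "t > 0" and S: "open S" "bounded S" and I: "finite I"
  shows "Iset ((*\<^sub>R) t ` S) (\<lambda>x. \<Sum>i\<in>I. c i * xmono x (e i)) =
         (\<Sum>i\<in>I. c i * t ^ (CARD('n) + mdeg (e i)) * Iset (S::(real^'n::finite) set) (\<lambda>x. xmono x (e i)))"
proof -
  have "Iset ((*\<^sub>R) t ` S) (\<lambda>x. \<Sum>i\<in>I. c i * xmono x (e i)) =
        t ^ CARD('n) * Iset S (\<lambda>x. \<Sum>i\<in>I. (c i * t ^ mdeg (e i)) * xmono x (e i))"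
    by (subst Iset_scale) (use t S in \<open>auto intro!: continuous_intros simp: xmono_scale mult_ac\<close>)
  also have "\<dots> = t ^ CARD('n) * (\<Sum>i\<in>I. (c i * t ^ mdeg (e i)) * Iset S (\<lambda>x. xmono x (e i)))"
    by (subst Iset_sum) (use I S in \<open>auto intro!: continuous_intros simp: Iset_cmult\<close>)
  finally show ?thesis by (simp add: sum_distrib_left power_add mult_ac)
qed

lemma Iset_diff:
  assumes "B \<subseteq> A" "bounded A" "A \<in> sets borel" "B \<in> sets borel" "continuous_on UNIV f"
  shows "Iset A f - Iset B f = Iset (A - B) f"
proof -
  have "Iset A f - Iset B f = (\<integral>x. indicator A x * f x - indicator B x * f x \<partial>lborel)"
    unfolding Iset_def
    by (rule Bochner_Integration.integral_diff[symmetric]) (use assms bounded_subset in \<open>auto intro!: Iset_integrable\<close>)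
  also have "(\<lambda>x. indicator A x * f x - indicator B x * f x) = (\<lambda>x. indicator (A - B) x * f x)"
    using assms(1) by (auto simp: fun_eq_iff indicator_def)
  finally show ?thesis unfolding Iset_def .
qed

lemma Iset_mono_set:
  assumes "A' \<subseteq> A" "bounded A" "A \<in> sets borel" "A' \<in> sets borel" "continuous_on UNIV f"
    "\<And>x. x \<in> A \<Longrightarrow> 0 \<le> f x"
  shows "Iset A' f \<le> Iset A f"
proof -
  have "integrable lborel (\<lambda>x. indicator A' x * f x)"
    by (rule Iset_integrable) (use assms bounded_subset in auto)
  moreover have "integrable lborel (\<lambda>x. indicator A x * f x)"
    by (rule Iset_integrable) (use assms in auto)
  ultimately show ?thesis unfolding Iset_def
    by (rule integral_mono) (use assms in \<open>auto simp: indicator_def\<close>)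
qed

lemma Iset_mono_fun:
  assumes "bounded A" "A \<in> sets borel" "continuous_on UNIV f" "continuous_on UNIV g"
    "\<And>x. x \<in> A \<Longrightarrow> f x \<le> g x"
  shows "Iset A f \<le> Iset A g"
proof -
  have "integrable lborel (\<lambda>x. indicator A x * f x)"
    by (rule Iset_integrable) (use assms in auto)
  moreover have "integrable lborel (\<lambda>x. indicator A x * g x)"
    by (rule Iset_integrable) (use assms in auto)
  ultimately show ?thesis unfolding Iset_def
    by (rule integral_mono) (use assms in \<open>auto simp: indicator_def\<close>)
qed

lemma Iset_lower:
  assumes "bounded A" "A \<in> sets borel" "continuous_on UNIV f"
    "\<And>x. x \<in> A \<Longrightarrow> e \<le> f x"
  shows "e * Iset A (\<lambda>_. 1) \<le> Iset A f"
  using Iset_mono_fun[of A "\<lambda>_. e" f] assms Iset_cmult[of A e "\<lambda>_. 1"] by auto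

lemma Iset_upper:
  assumes "bounded A" "A \<in> sets borel" "continuous_on UNIV f"
    "\<And>x. x \<in> A \<Longrightarrow> \<bar>f x\<bar> \<le> e"
  shows "\<bar>Iset A f\<bar> \<le> e * Iset A (\<lambda>_. 1)"
proof -
  have "\<bar>Iset A f\<bar> \<le> Iset A (\<lambda>_. e)"
  proof -
    have "integrable lborel (\<lambda>x. indicator A x * f x)"
      by (rule Iset_integrable) (use assms in auto)
    moreover have "integrable lborel (\<lambda>x. indicator A x * e)"
      by (rule Iset_integrable) (use assms in auto)
    ultimately show ?thesis unfolding Iset_def
      by (rule integral_abs_bound_integral) (use assms in \<open>auto simp: indicator_def\<close>)
  qed
  then show ?thesis using Iset_cmult[of A e "\<lambda>_. 1"] by simp
qed

lemma Iset_one_nonneg: "0 \<le> Iset A (\<lambda>_. 1)"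
  unfolding Iset_def by simp

lemma Iset_one_pos:
  assumes "open A" "bounded A" "A \<noteq> {}"
  shows "0 < Iset (A::(real^'n::finite) set) (\<lambda>_. 1)"
proof -
  obtain a :: "real^'n" and r where r: "r > 0" "ball a r \<subseteq> A"
    using assms by (meson all_not_in_conv openE)
  have "measure lborel (ball a r) = unit_ball_vol (DIM(real^'n)) * r ^ DIM(real^'n)"
    using r by (simp add: measure_def emeasure_ball)
  then have "0 < measure lborel (ball a r)" using r by simp
  also have "measure lborel (ball a r) = Iset (ball a r) (\<lambda>_. 1)"
    unfolding Iset_def by simp
  also have "\<dots> \<le> Iset A (\<lambda>_. 1)"
    using assms r by (intro Iset_mono_set) auto
  finally show ?thesis .
qed



lemma scale_sub:
  assumes "convex G" "0 \<in> G" "0 \<le> t" "t \<le> 1"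
  shows "(*\<^sub>R) t ` G \<subseteq> G"
proof
  fix y assume "y \<in> (*\<^sub>R) t ` G"
  then obtain x where x: "x \<in> G" "y = t *\<^sub>R x" by auto
  have "t *\<^sub>R x + (1 - t) *\<^sub>R 0 \<in> G"
    using assms x by (intro convexD) auto
  then show "y \<in> G" using x by simp
qed

lemma mem_scale:
  fixes x :: "'a::real_vector"
  assumes "t \<noteq> 0"
  shows "x \<in> (*\<^sub>R) t ` S \<longleftrightarrow> (1 / t) *\<^sub>R x \<in> S"
proof
  assume "x \<in> (*\<^sub>R) t ` S"
  then obtain y where "y \<in> S" "x = t *\<^sub>R y" by auto
  then show "(1 / t) *\<^sub>R x \<in> S" using assms by simp
next
  assume "(1 / t) *\<^sub>R x \<in> S"
  moreover have "x = t *\<^sub>R ((1 / t) *\<^sub>R x)" using assms by simp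
  ultimately show "x \<in> (*\<^sub>R) t ` S" by blast
qed

lemma frontier_not_in_open:
  assumes "open G" "x \<in> frontier G" shows "x \<notin> G"
  using assms by (simp add: frontier_def interior_open)

lemma shell_small:
  fixes G :: "(real^'n::finite) set"
  assumes G: "bounded G" "open G" and F: "continuous_on UNIV (F :: real^'n \<Rightarrow> real)"
    and Fz: "\<And>x. x \<in> frontier G \<Longrightarrow> F x = 0" and e: "e > 0"
  shows "\<exists>\<delta>>0. \<forall>t x. 1 - \<delta> < t \<longrightarrow> t < 1 \<longrightarrow> x \<in> G \<longrightarrow> x \<notin> (*\<^sub>R) t ` G \<longrightarrow> \<bar>F x\<bar> \<le> e"
proof -
  obtain R where R: "R > 0" "\<And>x. x \<in> closure G \<Longrightarrow> norm x \<le> R"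
    using bounded_closure[OF G(1)] by (auto simp: bounded_pos)
  have "uniformly_continuous_on (cball 0 R) F"
    by (rule compact_uniformly_continuous) (use F in \<open>auto intro: continuous_on_subset\<close>)
  then obtain d where d: "d > 0" "\<And>x y. x \<in> cball 0 R \<Longrightarrow> y \<in> cball 0 R \<Longrightarrow> dist y x < d \<Longrightarrow> dist (F y) (F x) < e"
    unfolding uniformly_continuous_on_def using e by metis
  define \<delta> where "\<delta> = min (1/2) (d / (2 * R))"
  have \<delta>: "\<delta> > 0" using d R by (simp add: \<delta>_def)
  have "\<bar>F x\<bar> \<le> e" if t: "1 - \<delta> < t" "t < 1" and x: "x \<in> G" "x \<notin> (*\<^sub>R) t ` G" for t x
  proof -
    have t0: "t > 1/2" using t by (simp add: \<delta>_def)
    let ?z = "(1 / t) *\<^sub>R x"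
    have zG: "?z \<notin> G" using x t0 mem_scale[of t x G] by auto
    have "closed_segment x ?z \<inter> frontier G \<noteq> {}"
      by (rule connected_Int_frontier) (use x zG in auto)
    then obtain y where y: "y \<in> closed_segment x ?z" "y \<in> frontier G" by auto
    have "dist y x \<le> dist x ?z" using dist_in_closed_segment[OF y(1)] by simp
    also have "dist x ?z = (1 / t - 1) * norm x"
    proof -
      have "x - ?z = (1 - 1/t) *\<^sub>R x" by (simp add: algebra_simps)
      then have "dist x ?z = \<bar>1 - 1/t\<bar> * norm x" by (simp add: dist_norm)
      also have "\<bar>1 - 1/t\<bar> = 1/t - 1" using t t0 by (simp add: field_simps)
      finally show ?thesis .
    qed
    also have "\<dots> \<le> (1/t - 1) * R"
      using R(2)[of x] x closure_subset t t0 by (intro mult_left_mono) (auto simp: field_simps)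
    also have "\<dots> < d"
    proof -
      have "1 - t < d / (2 * R)" using t by (simp add: \<delta>_def)
      then have "(1 - t) * (2 * R) < d" using R by (simp add: field_simps)
      moreover have "(1/t - 1) * R \<le> (1 - t) * (2 * R)"
      proof -
        have "1/t - 1 = (1 - t) / t" using t0 by (simp add: field_simps)
        also have "\<dots> = (1 - t) * (1 / t)" by simp
        also have "\<dots> \<le> (1 - t) * 2"
          using t t0 by (intro mult_left_mono) (auto simp: field_simps)
        finally show ?thesis using R by (simp add: mult_right_mono)
      qed
      ultimately show ?thesis by linarith
    qed
    finally have "dist y x < d" .
    moreover have "x \<in> closure G" using x(1) closure_subset by blast
    moreover have "y \<in> closure G" using y(2) unfolding frontier_def by simp
    ultimately have "dist y x < d" "x \<in> cball 0 R" "y \<in> cball 0 R"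
      using R(2) by auto
    then have "dist (F y) (F x) < e" using d(2) by blast
    then show ?thesis using Fz[OF y(2)] by (simp add: dist_real_def)
  qed
  then show ?thesis using \<delta> by blast
qed

lemma quot_tendsto:
  assumes "(phi has_real_derivative L) (at 1)"
  shows "((\<lambda>t. (phi 1 - phi t) / (1 - t)) \<longlongrightarrow> L) (at_left 1)"
proof -
  have "((\<lambda>t. (phi t - phi 1) / (t - 1)) \<longlongrightarrow> L) (at 1)"
    using assms by (simp add: has_field_derivative_iff)
  then have "((\<lambda>t. (phi t - phi 1) / (t - 1)) \<longlongrightarrow> L) (at_left 1)"
    by (rule tendsto_mono[rotated]) (simp add: at_le)
  moreover have "(phi t - phi 1) / (t - 1) = (phi 1 - phi t) / (1 - t)" for t
    by (simp add: divide_simps) (auto simp: algebra_simps)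
  ultimately show ?thesis by simp
qed

lemma lemmaA:
  fixes G :: "(real^'n::finite) set"
  assumes G: "convex G" "bounded G" "open G" "0 \<in> G" and F: "continuous_on UNIV F"
    and Fz: "\<And>x. x \<in> frontier G \<Longrightarrow> F x = 0"
    and phi: "\<And>t. 0 < t \<Longrightarrow> t \<le> 1 \<Longrightarrow> Iset ((*\<^sub>R) t ` G) F = phi t"
    and D: "(phi has_real_derivative L) (at 1)"
  shows "L = 0"
proof -
  define vol where "vol = Iset G (\<lambda>_. 1)"
  define K where "K = real CARD('n) * vol + 1"
  have vol0: "vol \<ge> 0" unfolding vol_def by (rule Iset_one_nonneg)
  then have K: "K > 0" unfolding K_def by (simp add: add_nonneg_pos)
  have lim: "((\<lambda>t. \<bar>(phi 1 - phi t) / (1 - t)\<bar>) \<longlongrightarrow> \<bar>L\<bar>) (at_left 1)"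
    using quot_tendsto[OF D] by (rule tendsto_rabs)
  have bound: "\<bar>L\<bar> \<le> e * K" if e: "e > 0" for e
  proof -
    obtain \<delta> where \<delta>: "\<delta> > 0" and
      sm: "\<And>t x. 1 - \<delta> < t \<Longrightarrow> t < 1 \<Longrightarrow> x \<in> G \<Longrightarrow> x \<notin> (*\<^sub>R) t ` G \<Longrightarrow> \<bar>F x\<bar> \<le> e"
      using shell_small[OF G(2,3) F Fz e] by blast
    have "\<forall>\<^sub>F t in at_left 1. t \<in> {max (1 - \<delta>) 0<..<1}"
      by (rule eventually_at_left_real) (use \<delta> in auto)
    then have "\<forall>\<^sub>F t in at_left 1. \<bar>(phi 1 - phi t) / (1 - t)\<bar> \<le> e * K"
    proof (rule eventually_mono)
      fix t assume t: "t \<in> {max (1 - \<delta>) 0<..<1}"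
      then have t0: "0 < t" "t < 1" "1 - \<delta> < t" by auto
      have sub: "(*\<^sub>R) t ` G \<subseteq> G" using G t0 by (intro scale_sub) auto
      have otG: "open ((*\<^sub>R) t ` G)" using G t0 by (simp add: open_scaling)
      have "phi 1 - phi t = Iset G F - Iset ((*\<^sub>R) t ` G) F"
        using phi[of 1] phi[of t] t0 by simp
      also have "\<dots> = Iset (G - (*\<^sub>R) t ` G) F"
        by (rule Iset_diff) (use sub G otG F in auto)
      finally have eq: "phi 1 - phi t = Iset (G - (*\<^sub>R) t ` G) F" .
      have "\<bar>Iset (G - (*\<^sub>R) t ` G) F\<bar> \<le> e * Iset (G - (*\<^sub>R) t ` G) (\<lambda>_. 1)"
        by (rule Iset_upper) (use G otG F sm t0 bounded_subset in auto)
      also have "Iset (G - (*\<^sub>R) t ` G) (\<lambda>_. 1) = vol - Iset ((*\<^sub>R) t ` G) (\<lambda>_. 1)"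
        unfolding vol_def by (rule Iset_diff[symmetric]) (use sub G otG in auto)
      also have "Iset ((*\<^sub>R) t ` G) (\<lambda>_. 1) = t ^ CARD('n) * vol"
        unfolding vol_def by (subst Iset_scale) (use t0 G in auto)
      also have "vol - t ^ CARD('n) * vol \<le> real CARD('n) * (1 - t) * vol"
      proof -
        have "1 + real CARD('n) * (t - 1) \<le> (1 + (t - 1)) ^ CARD('n)"
          by (rule Bernoulli_inequality) (use t0 in auto)
        then have "1 - t ^ CARD('n) \<le> real CARD('n) * (1 - t)" by (simp add: algebra_simps)
        from mult_right_mono[OF this vol0] show ?thesis by (simp add: algebra_simps)
      qed
      finally have "\<bar>phi 1 - phi t\<bar> \<le> e * (real CARD('n) * (1 - t) * vol)"
        using eq e by (simp add: mult_left_mono)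
      then have "\<bar>(phi 1 - phi t) / (1 - t)\<bar> \<le> e * real CARD('n) * vol"
        using t0 by (simp add: divide_simps abs_div) (simp add: mult_ac)
      also have "\<dots> \<le> e * K" using e unfolding K_def by simp
      finally show "\<bar>(phi 1 - phi t) / (1 - t)\<bar> \<le> e * K" .
    qed
    then show ?thesis by (rule tendsto_upperbound[OF lim]) simp
  qed
  show "L = 0"
  proof (rule ccontr)
    assume "L \<noteq> 0"
    then have "\<bar>L\<bar> \<le> (\<bar>L\<bar> / (2 * K)) * K" using K by (intro bound) auto
    then show False using K \<open>L \<noteq> 0\<close> by (simp add: field_simps)
  qed
qed



lemma cone_lemma:
  fixes G :: "(real^'n::finite) set"
  assumes G: "convex G" "open G" "0 \<in> G" and x0: "x0 \<in> frontier G" and r: "r > 0"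
  shows "\<exists>C t0. open C \<and> (\<forall>x s. 0 < s \<longrightarrow> (s *\<^sub>R x \<in> C \<longleftrightarrow> x \<in> C)) \<and> G \<inter> C \<noteq> {} \<and> t0 < 1 \<and>
     (\<forall>t x. t0 < t \<longrightarrow> t < 1 \<longrightarrow> x \<in> G \<longrightarrow> x \<notin> (*\<^sub>R) t ` G \<longrightarrow> x \<in> C \<longrightarrow> dist x x0 < r)"
proof -
  obtain \<rho> where \<rho>: "\<rho> > 0" "ball 0 \<rho> \<subseteq> G" using G(2,3) openE by blast
  have x0G: "x0 \<notin> G" by (rule frontier_not_in_open[OF G(2) x0])
  have x0c: "x0 \<in> closure G" using x0 unfolding frontier_def by simp
  define \<eta> where "\<eta> = min 1 (r / (2 * (norm x0 + 1)))"
  have "0 < 2 * norm x0 + 2" by (simp add: add_nonneg_pos)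
  then have \<eta>: "0 < \<eta>" "\<eta> \<le> 1" using r by (auto simp: \<eta>_def)
  have \<eta>x0: "\<eta> * norm x0 < r / 2"
  proof -
    have "\<eta> * norm x0 \<le> r / (2 * (norm x0 + 1)) * norm x0"
      by (rule mult_right_mono) (auto simp: \<eta>_def)
    also have "\<dots> < r / 2"
      using r by (simp add: field_simps add_pos_nonneg)
    finally show ?thesis .
  qed
  define r' where "r' = min (r/4) (\<rho> * \<eta> / 4)"
  have r': "0 < r'" "r' \<le> r/4" "r' \<le> \<rho> * \<eta> / 4" using r \<rho> \<eta> by (auto simp: r'_def)
  define C where "C = (\<Union>u\<in>{0<..}. (*\<^sub>R) u ` ball x0 r')"
  define t0 where "t0 = max (1/2) ((1-\<eta>)/(1-\<eta>/2))"
  have t0: "t0 < 1" using \<eta> by (auto simp: t0_def field_simps)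
  have t0h: "1/2 \<le> t0" "(1-\<eta>)/(1-\<eta>/2) \<le> t0" by (auto simp: t0_def)
  have memC: "x \<in> C \<longleftrightarrow> (\<exists>u>0. \<exists>b. dist x0 b < r' \<and> x = u *\<^sub>R b)" for x
    unfolding C_def by (auto simp: image_iff Bex_def)
  have oC: "open C" unfolding C_def by (intro open_UN ballI open_scaling) auto
  have inv: "s *\<^sub>R x \<in> C \<longleftrightarrow> x \<in> C" if s: "0 < s" for x s
  proof
    assume "s *\<^sub>R x \<in> C"
    then obtain u b where ub: "u > 0" "dist x0 b < r'" "s *\<^sub>R x = u *\<^sub>R b" using memC[THEN iffD1] by blast
    have "x = (u / s) *\<^sub>R b"
    proof -
      have "x = (1/s) *\<^sub>R (s *\<^sub>R x)" using s by simp
      also have "\<dots> = (u / s) *\<^sub>R b" using ub(3) by simp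
      finally show ?thesis .
    qed
    moreover have "u / s > 0" using ub s by simp
    ultimately show "x \<in> C" using memC[of x] ub by blast
  next
    assume "x \<in> C"
    then obtain u b where ub: "u > 0" "dist x0 b < r'" "x = u *\<^sub>R b" using memC[THEN iffD1] by blast
    then have "s *\<^sub>R x = (s * u) *\<^sub>R b" by simp
    moreover have "s * u > 0" using ub s by simp
    ultimately show "s *\<^sub>R x \<in> C" using memC[of "s *\<^sub>R x"] ub by blast
  qed
  have ne: "G \<inter> C \<noteq> {}"
  proof -
    obtain y where y: "y \<in> G" "dist x0 y < r'" using x0 r' unfolding frontier_straddle by blast
    have "\<exists>u>0. \<exists>b. dist x0 b < r' \<and> y = u *\<^sub>R b"
      by (rule exI[of _ 1], rule conjI, simp, rule exI[of _ y]) (use y in simp)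
    then have "y \<in> C" using memC[of y] by simp
    then show ?thesis using y by blast
  qed
  have main: "dist x x0 < r" if t: "t0 < t" "t < 1" and x: "x \<in> G" "x \<notin> (*\<^sub>R) t ` G" "x \<in> C" for t x
  proof -
    have tpos: "t > 0" using t t0h by linarith
    obtain u b where ub: "u > 0" "dist x0 b < r'" "x = u *\<^sub>R b" using memC[THEN iffD1, OF x(3)] by blast
    have u_up: "u < 1 + \<eta>"
    proof (rule ccontr)
      assume "\<not> u < 1 + \<eta>"
      then have u1: "u \<ge> 1 + \<eta>" by simp
      then have u1': "u - 1 \<ge> \<eta>" "u > 1" using \<eta> by auto
      define v where "v = (u / (u - 1)) *\<^sub>R (x0 - b)"
      have "norm v = (u / (u - 1)) * dist x0 b"
        using u1' by (simp add: v_def dist_norm)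
      also have "\<dots> \<le> (u / (u - 1)) * r'"
        using ub u1' by (intro mult_left_mono) auto
      also have "u / (u - 1) = 1 + 1 / (u - 1)" using u1' by (simp add: field_simps)
      also have "(1 + 1 / (u - 1)) * r' \<le> (1 + 1 / \<eta>) * r'"
        using u1' \<eta> r' by (intro mult_right_mono add_left_mono divide_left_mono) auto
      also have "\<dots> = r' + r' / \<eta>" by (simp add: field_simps)
      also have "\<dots> < \<rho>"
      proof -
        have "r' / \<eta> \<le> \<rho> / 4" using r' \<eta> by (simp add: field_simps)
        moreover have "r' \<le> \<rho> / 4" using r' \<eta> \<rho>
          by (smt (verit, best) mult_left_le divide_right_mono)
        ultimately show ?thesis using \<rho> by linarith
      qed
      finally have "v \<in> G" using \<rho> by auto
      have "x0 = (1/u) *\<^sub>R x + (1 - 1/u) *\<^sub>R v"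
      proof -
        have c: "(1 - 1/u) * (u / (u - 1)) = 1" using u1' by (simp add: field_simps)
        have "(1/u) *\<^sub>R x = b" using ub u1' by simp
        moreover have "(1 - 1/u) *\<^sub>R v = ((1 - 1/u) * (u / (u - 1))) *\<^sub>R (x0 - b)"
          unfolding v_def by (rule scaleR_scaleR)
        then have "(1 - 1/u) *\<^sub>R v = x0 - b" by (simp only: c scaleR_one)
        ultimately show ?thesis by simp
      qed
      moreover have "(1/u) *\<^sub>R x + (1 - 1/u) *\<^sub>R v \<in> G"
        using \<open>v \<in> G\<close> x(1) u1' G(1) by (intro convexD) auto
      ultimately show False using x0G by simp
    qed
    have u_low: "u > 1 - \<eta>"
    proof (rule ccontr)
      assume "\<not> u > 1 - \<eta>"
      then have u1: "u \<le> 1 - \<eta>" by simp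
      define \<tau> where "\<tau> = u / t"
      define lam where "lam = 1 - \<tau>"
      have \<tau>0: "\<tau> > 0" using ub tpos by (simp add: \<tau>_def)
      have "\<tau> \<le> (1 - \<eta>) / t" unfolding \<tau>_def using u1 tpos by (simp add: divide_right_mono)
      also have "(1 - \<eta>) / t < 1 - \<eta>/2"
      proof -
        have "(1-\<eta>)/(1-\<eta>/2) < t" using t t0h by linarith
        then have "1 - \<eta> < t * (1 - \<eta>/2)" using \<eta> by (simp add: field_simps)
        then show ?thesis using tpos by (simp add: field_simps)
      qed
      finally have lam: "lam > \<eta>/2" "lam < 1" using \<tau>0 by (auto simp: lam_def)
      define v where "v = (\<tau> / lam) *\<^sub>R (b - x0)"
      have "norm v = (\<tau> / lam) * dist b x0"
        using lam \<tau>0 \<eta> by (simp add: v_def dist_norm)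
      also have "\<dots> \<le> (2 / \<eta>) * dist b x0"
      proof (rule mult_right_mono)
        have "\<tau> / lam \<le> 1 / lam" using lam \<tau>0 \<eta> by (intro divide_right_mono) (auto simp: lam_def)
        also have "1 / lam \<le> 2 / \<eta>" using lam \<eta> by (simp add: field_simps)
        finally show "\<tau> / lam \<le> 2 / \<eta>" .
      qed simp
      also have "\<dots> \<le> (2 / \<eta>) * r'" using ub \<eta> by (intro mult_left_mono) (auto simp: dist_commute)
      also have "\<dots> < \<rho>" using r' \<eta> \<rho> by (simp add: field_simps)
      finally have vG: "v \<in> G" using \<rho> by auto
      have vx0: "v \<noteq> x0" using vG x0G by auto
      have p: "\<tau> *\<^sub>R b = (1 - \<tau>) *\<^sub>R v + \<tau> *\<^sub>R x0"
      proof -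
        have "(1 - \<tau>) *\<^sub>R v = \<tau> *\<^sub>R (b - x0)"
          unfolding v_def lam_def[symmetric] using lam \<eta> by simp
        then show ?thesis by (simp add: algebra_simps)
      qed
      have "\<tau> *\<^sub>R b \<in> open_segment v x0"
        unfolding in_segment using p vx0 \<tau>0 lam \<eta> by (auto simp: lam_def intro!: exI[of _ \<tau>])
      moreover have "open_segment v x0 \<subseteq> interior G"
        by (rule in_interior_closure_convex_segment) (use G vG x0c interior_open in auto)
      ultimately have "\<tau> *\<^sub>R b \<in> G" using interior_open[OF G(2)] by auto
      moreover have "x = t *\<^sub>R (\<tau> *\<^sub>R b)" using ub tpos by (simp add: \<tau>_def)
      ultimately show False using x(2) by blast
    qed
    have eqx: "x - x0 = u *\<^sub>R (b - x0) + (u - 1) *\<^sub>R x0" using ub by (simp add: algebra_simps)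
    have "dist x x0 \<le> norm (u *\<^sub>R (b - x0)) + norm ((u - 1) *\<^sub>R x0)"
      unfolding dist_norm eqx by (rule norm_triangle_ineq)
    also have "norm (u *\<^sub>R (b - x0)) = u * dist b x0" using ub by (simp add: dist_norm)
    also have "norm ((u - 1) *\<^sub>R x0) = \<bar>u - 1\<bar> * norm x0" by simp
    also have "u * dist b x0 \<le> 2 * r'"
    proof -
      have "u * dist b x0 \<le> u * r'" using ub by (intro mult_left_mono) (auto simp: dist_commute)
      also have "\<dots> \<le> 2 * r'" using u_up \<eta> r' by (intro mult_right_mono) auto
      finally show ?thesis .
    qed
    also have "\<bar>u - 1\<bar> * norm x0 \<le> \<eta> * norm x0"
      using u_up u_low by (intro mult_right_mono) auto
    finally show ?thesis using \<eta>x0 r' by linarith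
  qed
  show ?thesis
    by (rule exI[of _ C], rule exI[of _ t0]) (use oC inv ne t0 main in blast)
qed



lemma lemmaB:
  fixes G :: "(real^'n::finite) set"
  assumes G: "convex G" "bounded G" "open G" "0 \<in> G" and F: "continuous_on UNIV F"
    and Fnn: "\<And>x. 0 \<le> F x"
    and phi: "\<And>t. 0 < t \<Longrightarrow> t \<le> 1 \<Longrightarrow> Iset ((*\<^sub>R) t ` G) F = phi t"
    and D: "(phi has_real_derivative 0) (at 1)"
    and x0: "x0 \<in> frontier G"
  shows "F x0 = 0"
proof (rule ccontr)
  assume "F x0 \<noteq> 0"
  then have pos: "F x0 > 0" using Fnn[of x0] by linarith
  define e where "e = F x0 / 2"
  have e: "e > 0" using pos by (simp add: e_def)
  obtain r where r: "r > 0" "\<And>x. dist x x0 < r \<Longrightarrow> dist (F x) (F x0) < e"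
    using F e unfolding continuous_on_iff by blast
  have rF: "e \<le> F x" if "dist x x0 < r" for x
  proof -
    have a: "\<bar>F x - F x0\<bar> < e" using r(2)[OF that] by (simp add: dist_real_def)
    show ?thesis using a abs_ge_minus_self[of "F x - F x0"] e_def by linarith
  qed
  obtain C t0 where oC: "open C" and inv: "\<And>x s. 0 < s \<Longrightarrow> (s *\<^sub>R x \<in> C \<longleftrightarrow> x \<in> C)"
    and ne: "G \<inter> C \<noteq> {}" and t0: "t0 < 1"
    and near: "\<And>t x. t0 < t \<Longrightarrow> t < 1 \<Longrightarrow> x \<in> G \<Longrightarrow> x \<notin> (*\<^sub>R) t ` G \<Longrightarrow> x \<in> C \<Longrightarrow> dist x x0 < r"
    using cone_lemma[OF G(1,3,4) x0 r(1)] by blast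
  define E where "E = G \<inter> C"
  have oE: "open E" using G oC by (simp add: E_def open_Int)
  have bE: "bounded E" using G(2) by (simp add: E_def bounded_Int)
  define vE where "vE = Iset E (\<lambda>_. 1)"
  have vE: "vE > 0" unfolding vE_def using oE bE ne by (intro Iset_one_pos) (auto simp: E_def)
  have "\<forall>\<^sub>F t in at_left 1. t \<in> {max t0 0<..<1}"
    by (rule eventually_at_left_real) (use t0 in auto)
  then have ev: "\<forall>\<^sub>F t in at_left 1. e * vE \<le> (phi 1 - phi t) / (1 - t)"
  proof (rule eventually_mono)
    fix t assume t: "t \<in> {max t0 0<..<1}"
    then have tt: "0 < t" "t < 1" "t0 < t" by auto
    have sub: "(*\<^sub>R) t ` G \<subseteq> G" using G tt by (intro scale_sub) auto
    have otG: "open ((*\<^sub>R) t ` G)" using G tt by (simp add: open_scaling)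
    have otE: "open ((*\<^sub>R) t ` E)" using oE tt by (simp add: open_scaling)
    have subE: "(*\<^sub>R) t ` E \<subseteq> E"
    proof
      fix y assume "y \<in> (*\<^sub>R) t ` E"
      then obtain z where z: "z \<in> E" "y = t *\<^sub>R z" by auto
      have "y \<in> G" using z sub unfolding E_def by auto
      moreover have "y \<in> C" using z inv[of t z] tt unfolding E_def by auto
      ultimately show "y \<in> E" by (simp add: E_def)
    qed
    have EG: "E - (*\<^sub>R) t ` E \<subseteq> G - (*\<^sub>R) t ` G"
    proof
      fix x assume x: "x \<in> E - (*\<^sub>R) t ` E"
      have "x \<notin> (*\<^sub>R) t ` G"
      proof
        assume "x \<in> (*\<^sub>R) t ` G"
        then obtain g where g: "g \<in> G" "x = t *\<^sub>R g" by auto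
        have "g \<in> C" using inv[of t g] tt x g unfolding E_def by auto
        then have "x \<in> (*\<^sub>R) t ` E" using g by (auto simp: E_def)
        then show False using x by blast
      qed
      then show "x \<in> G - (*\<^sub>R) t ` G" using x by (auto simp: E_def)
    qed
    have Fe: "e \<le> F x" if "x \<in> E - (*\<^sub>R) t ` E" for x
    proof -
      have "x \<in> G - (*\<^sub>R) t ` G" "x \<in> C" using that EG unfolding E_def by auto
      then have "dist x x0 < r" using near[of t x] tt by auto
      then show ?thesis by (rule rF)
    qed
    have "phi 1 - phi t = Iset G F - Iset ((*\<^sub>R) t ` G) F"
      using phi[of 1] phi[of t] tt by simp
    also have "\<dots> = Iset (G - (*\<^sub>R) t ` G) F"
      by (rule Iset_diff) (use sub G otG F in auto)
    finally have eq: "phi 1 - phi t = Iset (G - (*\<^sub>R) t ` G) F" .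
    have "Iset (E - (*\<^sub>R) t ` E) F \<le> Iset (G - (*\<^sub>R) t ` G) F"
      by (rule Iset_mono_set) (use EG G otG oE otE F Fnn bounded_subset in auto)
    moreover have "e * Iset (E - (*\<^sub>R) t ` E) (\<lambda>_. 1) \<le> Iset (E - (*\<^sub>R) t ` E) F"
      by (rule Iset_lower) (use bE oE otE F Fe bounded_subset in auto)
    moreover have "Iset (E - (*\<^sub>R) t ` E) (\<lambda>_. 1) = vE - Iset ((*\<^sub>R) t ` E) (\<lambda>_. 1)"
      unfolding vE_def by (rule Iset_diff[symmetric]) (use subE bE oE otE in auto)
    moreover have "Iset ((*\<^sub>R) t ` E) (\<lambda>_. 1) = t ^ CARD('n) * vE"
      unfolding vE_def by (subst Iset_scale) (use tt oE in auto)
    moreover have "t ^ CARD('n) \<le> t ^ 1"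
      by (rule power_decreasing) (use tt in auto)
    ultimately have "e * ((1 - t) * vE) \<le> phi 1 - phi t"
    proof -
      assume a: "Iset (E - (*\<^sub>R) t ` E) F \<le> Iset (G - (*\<^sub>R) t ` G) F"
        "e * Iset (E - (*\<^sub>R) t ` E) (\<lambda>_. 1) \<le> Iset (E - (*\<^sub>R) t ` E) F"
        "Iset (E - (*\<^sub>R) t ` E) (\<lambda>_. 1) = vE - Iset ((*\<^sub>R) t ` E) (\<lambda>_. 1)"
        "Iset ((*\<^sub>R) t ` E) (\<lambda>_. 1) = t ^ CARD('n) * vE" "t ^ CARD('n) \<le> t ^ 1"
      have "(1 - t) * vE \<le> vE - t ^ CARD('n) * vE"
        using a(5) vE by (simp add: algebra_simps mult_right_mono)
      then have "e * ((1 - t) * vE) \<le> e * (vE - t ^ CARD('n) * vE)"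
        using e by (simp add: mult_left_mono)
      also have "\<dots> \<le> phi 1 - phi t" using a eq by simp
      finally show ?thesis .
    qed
    then show "e * vE \<le> (phi 1 - phi t) / (1 - t)"
      using tt by (simp add: field_simps)
  qed
  have "e * vE \<le> 0"
    by (rule tendsto_lowerbound[OF quot_tendsto[OF D] ev]) simp
  then show False using e vE by (simp add: mult_le_0_iff)
qed



lemma poly_deriv:
  "((\<lambda>t. \<Sum>i\<in>I. c i * t ^ (k i) * y i) has_real_derivative (\<Sum>i\<in>I. c i * real (k i) * y i)) (at 1)"
proof -
  have "((\<lambda>t. \<Sum>i\<in>I. c i * t ^ (k i) * y i) has_real_derivative (\<Sum>i\<in>I. c i * (real (k i) * 1 ^ (k i - 1)) * y i)) (at 1)"
    by (intro derivative_eq_intros DERIV_sum) auto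
  then show ?thesis by simp
qed

lemma poly_phi:
  fixes G :: "(real^'n::finite) set"
  assumes G: "bounded G" "open G" and I: "finite I" and t: "0 < t"
  shows "Iset ((*\<^sub>R) t ` G) (\<lambda>x. \<Sum>i\<in>I. c i * xmono x (e i)) =
         (\<Sum>i\<in>I. c i * t ^ (CARD('n) + mdeg (e i)) * moment G (e i))"
  using Iset_poly_scale[OF t G(2,1) I, of c e] moment_Iset[OF G] by simp

lemma A_poly:
  fixes G :: "(real^'n::finite) set"
  assumes G: "convex G" "bounded G" "open G" "0 \<in> G" and I: "finite I"
    and Fz: "\<And>x. x \<in> frontier G \<Longrightarrow> (\<Sum>i\<in>I. c i * xmono x (e i)) = 0"
  shows "(\<Sum>i\<in>I. c i * real (CARD('n) + mdeg (e i)) * moment G (e i)) = 0"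
  by (rule lemmaA[OF G _ Fz poly_phi[OF G(2,3) I] poly_deriv])
     (auto intro!: continuous_intros)

lemma B_poly:
  fixes G :: "(real^'n::finite) set"
  assumes G: "convex G" "bounded G" "open G" "0 \<in> G" and I: "finite I"
    and Fnn: "\<And>x. 0 \<le> (\<Sum>i\<in>I. c i * xmono x (e i))"
    and L: "(\<Sum>i\<in>I. c i * real (CARD('n) + mdeg (e i)) * moment G (e i)) = 0"
    and x0: "x0 \<in> frontier G"
  shows "(\<Sum>i\<in>I. c i * xmono x0 (e i)) = 0"
proof -
  have D: "((\<lambda>t. \<Sum>i\<in>I. c i * t ^ (CARD('n) + mdeg (e i)) * moment G (e i)) has_real_derivative 0) (at 1)"
    using poly_deriv[of c "\<lambda>i. CARD('n) + mdeg (e i)" "\<lambda>i. moment G (e i)" I] L by simp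
  show ?thesis
    by (rule lemmaB[OF G _ Fnn poly_phi[OF G(2,3) I] D x0])
       (auto intro!: continuous_intros)
qed



theorem corollary2:
  fixes G :: "(real^'n::finite) set" and d :: nat
  assumes "convex G" and "bounded G" and "open G"
    and "algebraic_boundary G"
    and "0 \<in> G" and "interior (closure G) = G"
    and "\<exists>p. deg_le d p \<and> (\<forall>x\<in>frontier G. peval d p x = 0) \<and> peval d p 0 \<noteq> 0"
  shows "(\<exists>g. moment_system d (moment G) g) \<and>
         (\<forall>g. moment_system d (moment G) g \<longrightarrow>
              (\<forall>x\<in>frontier G. 1 - (\<Sum>\<beta>\<in>midx d - {zidx}. g \<beta> * xmono x \<beta>) = 0))"
proof -
  note G = assms(1,2,3,5)
  define y where "y = moment G"
  define N where "N = CARD('n)"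
  obtain p where pz: "\<And>x. x \<in> frontier G \<Longrightarrow> peval d p x = 0" and p0: "p zidx \<noteq> 0"
    using assms(7) peval_0 by metis
  define M :: "('n \<Rightarrow> nat) set" where "M = midx d - {zidx}"
  have finM: "finite M" by (simp add: M_def)
  have splitM: "(\<Sum>\<beta>\<in>midx d. f \<beta>) = f zidx + (\<Sum>\<beta>\<in>M. f \<beta>)" for f :: "('n \<Rightarrow> nat) \<Rightarrow> real"
    unfolding M_def by (rule sum.remove) auto
  have key: "(\<Sum>\<beta>\<in>midx d. p \<beta> * real (N + mdeg (\<lambda>i. \<alpha> i + \<beta> i)) * y (\<lambda>i. \<alpha> i + \<beta> i)) = 0" for \<alpha>
  proof -
    have "(\<Sum>\<beta>\<in>midx d. p \<beta> * xmono x (\<lambda>i. \<alpha> i + \<beta> i)) = 0" if "x \<in> frontier G" for x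
    proof -
      have "(\<Sum>\<beta>\<in>midx d. p \<beta> * xmono x (\<lambda>i. \<alpha> i + \<beta> i)) = xmono x \<alpha> * peval d p x"
        unfolding peval_def xmono_add sum_distrib_left by (simp add: mult_ac)
      then show ?thesis using pz[OF that] by simp
    qed
    then show ?thesis unfolding y_def N_def
      by (intro A_poly[OF G]) auto
  qed
  have cardpos: "0 < CARD('n)" by (simp add: card_gt_0_iff)
  have A: "real (N + mdeg \<alpha>) > 0" for \<alpha> :: "'n \<Rightarrow> nat"
    unfolding N_def of_nat_0_less_iff using cardpos by (simp only: add_gr_0 simp_thms)
  \<comment> \<open>a reformulation of the system\<close>
  have sys_iff: "(- y \<alpha> + (\<Sum>\<beta>\<in>M. real (N + mdeg \<alpha> + mdeg \<beta>) / real (N + mdeg \<alpha>) * y (\<lambda>i. \<alpha> i + \<beta> i) * g \<beta>) = 0)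
     \<longleftrightarrow> (\<Sum>\<beta>\<in>midx d. (if \<beta> = zidx then 1 else - g \<beta>) * real (N + mdeg (\<lambda>i. \<alpha> i + \<beta> i)) * y (\<lambda>i. \<alpha> i + \<beta> i)) = 0"
    for \<alpha> g
  proof -
    define a where "a = real (N + mdeg \<alpha>)"
    have a: "a > 0" using A unfolding a_def .
    have "(\<Sum>\<beta>\<in>midx d. (if \<beta> = zidx then 1 else - g \<beta>) * real (N + mdeg (\<lambda>i. \<alpha> i + \<beta> i)) * y (\<lambda>i. \<alpha> i + \<beta> i))
        = a * y \<alpha> - (\<Sum>\<beta>\<in>M. g \<beta> * real (N + mdeg \<alpha> + mdeg \<beta>) * y (\<lambda>i. \<alpha> i + \<beta> i))"
    proof -
      have r: "(\<Sum>\<beta>\<in>M. (if \<beta> = zidx then 1 else - g \<beta>) * real (N + mdeg (\<lambda>i. \<alpha> i + \<beta> i)) * y (\<lambda>i. \<alpha> i + \<beta> i))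
          = (\<Sum>\<beta>\<in>M. - (g \<beta> * real (N + mdeg \<alpha> + mdeg \<beta>) * y (\<lambda>i. \<alpha> i + \<beta> i)))"
        by (rule sum.cong) (auto simp: M_def mdeg_add)
      show ?thesis unfolding splitM r sum_negf by (simp add: a_def)
    qed
    also have "(\<Sum>\<beta>\<in>M. g \<beta> * real (N + mdeg \<alpha> + mdeg \<beta>) * y (\<lambda>i. \<alpha> i + \<beta> i))
       = a * (\<Sum>\<beta>\<in>M. real (N + mdeg \<alpha> + mdeg \<beta>) / real (N + mdeg \<alpha>) * y (\<lambda>i. \<alpha> i + \<beta> i) * g \<beta>)"
      unfolding sum_distrib_left using a by (intro sum.cong) (auto simp: a_def field_simps)
    finally show ?thesis using a by (auto simp: algebra_simps)
  qed
  have part1: "moment_system d y (\<lambda>\<beta>. - p \<beta> / p zidx)"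
    unfolding moment_system_def N_def[symmetric] M_def[symmetric]
  proof
    fix \<alpha> :: "'n \<Rightarrow> nat" assume "\<alpha> \<in> midx d"
    have "(\<Sum>\<beta>\<in>midx d. (if \<beta> = zidx then 1 else - (- p \<beta> / p zidx)) * real (N + mdeg (\<lambda>i. \<alpha> i + \<beta> i)) * y (\<lambda>i. \<alpha> i + \<beta> i))
        = (\<Sum>\<beta>\<in>midx d. (p \<beta> / p zidx) * real (N + mdeg (\<lambda>i. \<alpha> i + \<beta> i)) * y (\<lambda>i. \<alpha> i + \<beta> i))"
      using p0 by (intro sum.cong) auto
    also have "\<dots> = (1 / p zidx) * (\<Sum>\<beta>\<in>midx d. p \<beta> * real (N + mdeg (\<lambda>i. \<alpha> i + \<beta> i)) * y (\<lambda>i. \<alpha> i + \<beta> i))"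
      unfolding sum_distrib_left by (intro sum.cong) auto
    also have "\<dots> = 0" using key by simp
    finally have X: "(\<Sum>\<beta>\<in>midx d. (if \<beta> = zidx then 1 else - (- p \<beta> / p zidx)) * real (N + mdeg (\<lambda>i. \<alpha> i + \<beta> i)) * y (\<lambda>i. \<alpha> i + \<beta> i)) = 0" .
    show "- y \<alpha> + (\<Sum>\<beta>\<in>M. real (N + mdeg \<alpha> + mdeg \<beta>) / real (N + mdeg \<alpha>) * y (\<lambda>i. \<alpha> i + \<beta> i) * (- p \<beta> / p zidx)) = 0"
      by (rule iffD2[OF sys_iff[of \<alpha> "\<lambda>\<beta>. - p \<beta> / p zidx"] X])
  qed
  have part2: "1 - (\<Sum>\<beta>\<in>M. g \<beta> * xmono x \<beta>) = 0" if g: "moment_system d y g" and x: "x \<in> frontier G" for g x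
  proof -
    define h where "h \<beta> = (if \<beta> = zidx then 1 else - g \<beta>)" for \<beta>
    define q where "q \<beta> = h \<beta> - p \<beta> / p zidx" for \<beta>
    have H: "(\<Sum>\<beta>\<in>midx d. h \<beta> * real (N + mdeg (\<lambda>i. \<alpha> i + \<beta> i)) * y (\<lambda>i. \<alpha> i + \<beta> i)) = 0"
      if "\<alpha> \<in> midx d" for \<alpha>
    proof -
      have "- y \<alpha> + (\<Sum>\<beta>\<in>M. real (N + mdeg \<alpha> + mdeg \<beta>) / real (N + mdeg \<alpha>) * y (\<lambda>i. \<alpha> i + \<beta> i) * g \<beta>) = 0"
        using g that unfolding moment_system_def N_def[symmetric] M_def[symmetric] by blast
      from iffD1[OF sys_iff[of \<alpha> g] this] show ?thesis unfolding h_def .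
    qed
    have P: "(\<Sum>\<beta>\<in>midx d. (p \<beta> / p zidx) * real (N + mdeg (\<lambda>i. \<alpha> i + \<beta> i)) * y (\<lambda>i. \<alpha> i + \<beta> i)) = 0" for \<alpha>
    proof -
      have "(\<Sum>\<beta>\<in>midx d. (p \<beta> / p zidx) * real (N + mdeg (\<lambda>i. \<alpha> i + \<beta> i)) * y (\<lambda>i. \<alpha> i + \<beta> i))
        = (1 / p zidx) * (\<Sum>\<beta>\<in>midx d. p \<beta> * real (N + mdeg (\<lambda>i. \<alpha> i + \<beta> i)) * y (\<lambda>i. \<alpha> i + \<beta> i))"
        unfolding sum_distrib_left by (intro sum.cong) auto
      then show ?thesis using key by simp
    qed
    have Q: "(\<Sum>\<beta>\<in>midx d. q \<beta> * real (N + mdeg (\<lambda>i. \<alpha> i + \<beta> i)) * y (\<lambda>i. \<alpha> i + \<beta> i)) = 0"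
      if "\<alpha> \<in> midx d" for \<alpha>
      using H[OF that] P[of \<alpha>] unfolding q_def by (simp add: algebra_simps sum_subtractf)
    define qx where "qx x = (\<Sum>\<alpha>\<in>midx d. q \<alpha> * xmono x \<alpha>)" for x
    have sq: "(\<Sum>ab\<in>midx d \<times> midx d. (q (fst ab) * q (snd ab)) * xmono x (\<lambda>i. fst ab i + snd ab i)) = (qx x)^2" for x
      unfolding qx_def power2_eq_square sum_product sum.cartesian_product xmono_add
      by (intro sum.cong) (auto simp: mult_ac)
    have L: "(\<Sum>ab\<in>midx d \<times> midx d. (q (fst ab) * q (snd ab)) * real (CARD('n) + mdeg (\<lambda>i. fst ab i + snd ab i)) * moment G (\<lambda>i. fst ab i + snd ab i)) = 0"
    proof -
      have "(\<Sum>ab\<in>midx d \<times> midx d. (q (fst ab) * q (snd ab)) * real (CARD('n) + mdeg (\<lambda>i. fst ab i + snd ab i)) * moment G (\<lambda>i. fst ab i + snd ab i))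
          = (\<Sum>\<alpha>\<in>midx d. q \<alpha> * (\<Sum>\<beta>\<in>midx d. q \<beta> * real (N + mdeg (\<lambda>i. \<alpha> i + \<beta> i)) * y (\<lambda>i. \<alpha> i + \<beta> i)))"
        unfolding sum_distrib_left y_def N_def sum.cartesian_product
        by (simp add: split_beta mult_ac)
      also have "\<dots> = 0" using Q by simp
      finally show ?thesis .
    qed
    have "(\<Sum>ab\<in>midx d \<times> midx d. (q (fst ab) * q (snd ab)) * xmono x (\<lambda>i. fst ab i + snd ab i)) = 0"
      by (rule B_poly[OF G _ _ L x]) (auto simp: sq)
    then have qx0: "qx x = 0" using sq by simp
    have "(\<Sum>\<beta>\<in>midx d. h \<beta> * xmono x \<beta>) = qx x + (1 / p zidx) * peval d p x"
      unfolding qx_def q_def peval_def sum_distrib_left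
      by (simp add: algebra_simps sum.distrib[symmetric])
    also have "\<dots> = 0" using qx0 pz[OF x] by simp
    finally have "(\<Sum>\<beta>\<in>midx d. h \<beta> * xmono x \<beta>) = 0" .
    moreover have "(\<Sum>\<beta>\<in>midx d. h \<beta> * xmono x \<beta>) = 1 - (\<Sum>\<beta>\<in>M. g \<beta> * xmono x \<beta>)"
    proof -
      have r: "(\<Sum>\<beta>\<in>M. h \<beta> * xmono x \<beta>) = (\<Sum>\<beta>\<in>M. - (g \<beta> * xmono x \<beta>))"
        by (rule sum.cong) (auto simp: M_def h_def)
      show ?thesis unfolding splitM r sum_negf by (simp add: h_def)
    qed
    ultimately show ?thesis by simp
  qed
  show ?thesis
    using part1 part2 unfolding y_def M_def by blast
qed

end
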